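(* Let $n\ge 2$ and let $(G(k))_{k\in\mathbb{N}}$ be a sequence of digraphs on $\mathcal{V}=\{1,\dots,n\}$ with knowledge sets evolving by the flooding update described in the context. Define $$\nu(k)=\begin{cases} k+2 & \text{if } k\le\lceil n/2\rceil-1,\\ n & \text{if } k\ge\lceil n/2\rceil.\end{cases}$$ If for every $k\in\{0,1,\dots,n-2\}$ the digraph $G(k)$ contains $\nu(k)(k)$ (i.e. every node has, at time $k$, a closed input-cord of cardinality greater than $\nu(k)-2$), then $|\{i\in\mathcal{V}: d_w\in\mathcal{K}_i(k+1)\}|\ge k+2$ for all $w\in\mathcal{V}$ and all $k\in\{0,1,\dots,n-2\}$.
   Context: Network: $\mathcal{V}=\{1,\dots,n\}$; node $i$ holds initial data $d_i\in\mathbb{R}$, pairwise distinct. At discrete times $k\in\mathbb{N}$ communication follows digraph $G(k)=(\mathcal{V},\mathcal{E}(k))$; node $i$ sends to $j$ at time $k$ iff $(i,j)\in\mathcal{E}(k)$. Knowledge sets: $\mathcal{K}_i(0)=\{d_i\}$ and $\mathcal{K}_j(k+1)=\mathcal{K}_j(k)\cup\bigcup_{i:(i,j)\in\mathcal{E}(k)}\mathcal{K}_i(k)$. An input-cord to node $i$ at time $k$ is an ordered list $(\mathcal{I}^i_1,\dots,\mathcal{I}^i_m)$ of pairwise distinct nodes of $\mathcal{V}\setminus\{i\}$ with $(\mathcal{I}^i_j,\mathcal{I}^i_{j+1})\in\mathcal{E}(k)$ for $j=1,\dots,m-1$ and $(\mathcal{I}^i_m,i)\in\mathcal{E}(k)$;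 its cardinality is $m$. It is closed if moreover $(i,\mathcal{I}^i_1)\in\mathcal{E}(k)$. For an integer $\chi$, node $i$ is contained in a $\chi(k)$-cycle if it has at time $k$ a closed input-cord of cardinality greater than $\chi-2$; $G(k)$ contains $\chi(k)$ if every node is contained in a $\chi(k)$-cycle. *)

theory Defs
  imports Complex_Main
begin

text \<open>Nodes are the naturals 1..n; a time-varying digraph is a map
  E :: nat => (nat * nat) set giving the edge set at each time k.
  (i,j) in E k means node i sends to node j at time k.\<close>

fun K :: "(nat \<Rightarrow> 'a) \<Rightarrow> (nat \<Rightarrow> (nat \<times> nat) set) \<Rightarrow> nat \<Rightarrow> nat \<Rightarrow> 'a set" where
  "K d E 0 j = {d j}"
| "K d E (Suc k) j = K d E k j \<union> (\<Union>i\<in>{i. (i, j) \<in> E k}. K d E k i)"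

definition input_cord :: "nat set \<Rightarrow> (nat \<Rightarrow> (nat \<times> nat) set) \<Rightarrow> nat \<Rightarrow> nat \<Rightarrow> nat list \<Rightarrow> bool" where
  "input_cord V E k i cs \<longleftrightarrow>
     cs \<noteq> [] \<and> distinct cs \<and> set cs \<subseteq> V - {i} \<and>
     (\<forall>j. Suc j < length cs \<longrightarrow> (cs ! j, cs ! Suc j) \<in> E k) \<and>
     (last cs, i) \<in> E k"

definition closed_input_cord :: "nat set \<Rightarrow> (nat \<Rightarrow> (nat \<times> nat) set) \<Rightarrow> nat \<Rightarrow> nat \<Rightarrow> nat list \<Rightarrow> bool" where
  "closed_input_cord V E k i cs \<longleftrightarrow> input_cord V E k i cs \<and> (i, hd cs) \<in> E k"

definition in_cycle :: "nat set \<Rightarrow> (nat \<Rightarrow> (nat \<times> nat) set) \<Rightarrow> int \<Rightarrow> nat \<Rightarrow> nat \<Rightarrow> bool" where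
  "in_cycle V E chi k i \<longleftrightarrow> (\<exists>cs. closed_input_cord V E k i cs \<and> int (length cs) > chi - 2)"

definition contains_cycle :: "nat set \<Rightarrow> (nat \<Rightarrow> (nat \<times> nat) set) \<Rightarrow> int \<Rightarrow> nat \<Rightarrow> bool" where
  "contains_cycle V E chi k \<longleftrightarrow> (\<forall>i\<in>V. in_cycle V E chi k i)"

definition nu :: "nat \<Rightarrow> nat \<Rightarrow> int" where
  "nu n k = (if int k \<le> \<lceil>real n / 2\<rceil> - 1 then int k + 2 else int n)"

end

theory Submission
  imports Defs
begin

lemma K_mono: "x \<in> K d E k i \<Longrightarrow> x \<in> K d E (Suc k) i"
  by simp

lemma K_edge: "x \<in> K d E k p \<Longrightarrow> (p, q) \<in> E k \<Longrightarrow> x \<in> K d E (Suc k) q"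
  by auto

lemma nu_ge: "k \<le> n - 2 \<Longrightarrow> n \<ge> 2 \<Longrightarrow> nu n k \<ge> int k + 2"
  unfolding nu_def by auto

lemma step:
  fixes n :: nat and d :: "nat \<Rightarrow> real" and E :: "nat \<Rightarrow> (nat \<times> nat) set"
  assumes n2: "n \<ge> 2"
    and kle: "k \<le> n - 2"
    and cyc: "contains_cycle {1..n} E (nu n k) k"
    and w: "w \<in> {1..n}"
    and wS: "d w \<in> K d E k w"
    and c: "card {i\<in>{1..n}. d w \<in> K d E k i} \<ge> k + 1"
  shows "card {i\<in>{1..n}. d w \<in> K d E (Suc k) i} \<ge> k + 2"
proof (rule ccontr)
  define S where "S = {i\<in>{1..n}. d w \<in> K d E k i}"
  define T where "T = {i\<in>{1..n}. d w \<in> K d E (Suc k) i}"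
  assume "\<not> card {i\<in>{1..n}. d w \<in> K d E (Suc k) i} \<ge> k + 2"
  hence cT: "card T < k + 2" unfolding T_def by simp
  have ST: "S \<subseteq> T" unfolding S_def T_def by auto
  have fT: "finite T" unfolding T_def by auto
  have "card S \<le> card T" using card_mono[OF fT ST] .
  hence "card T = card S" using c cT unfolding S_def by linarith
  hence TS: "T = S" using card_subset_eq[OF fT ST] by simp
  from cyc w obtain cs where cc: "closed_input_cord {1..n} E k w cs"
    and len: "int (length cs) > nu n k - 2"
    unfolding contains_cycle_def in_cycle_def by blast
  have lenk: "length cs \<ge> k + 1" using len nu_ge[OF kle n2] by linarith
  from cc have ne: "cs \<noteq> []" and dist: "distinct cs" and sub: "set cs \<subseteq> {1..n} - {w}"
    and ch: "\<And>j. Suc j < length cs \<Longrightarrow> (cs ! j, cs ! Suc j) \<in> E k"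
    and hd: "(w, hd cs) \<in> E k"
    unfolding closed_input_cord_def input_cord_def by auto
  have inS: "j < length cs \<Longrightarrow> cs ! j \<in> S" for j
  proof (induction j)
    case 0
    have "cs ! 0 \<in> {1..n}" using sub ne by (meson DiffD1 nth_mem subsetD 0)
    moreover have "d w \<in> K d E (Suc k) (cs ! 0)"
      using K_edge[OF wS] hd ne by (simp add: hd_conv_nth)
    ultimately have "cs ! 0 \<in> T" unfolding T_def by simp
    thus ?case using TS by simp
  next
    case (Suc j)
    hence p: "cs ! j \<in> S" by simp
    have "cs ! Suc j \<in> {1..n}" using sub Suc.prems by (meson DiffD1 nth_mem subsetD)
    moreover have "d w \<in> K d E (Suc k) (cs ! Suc j)"
      using K_edge[of "d w" d E k "cs ! j" "cs ! Suc j"] p ch[OF Suc.prems] unfolding S_def by simp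
    ultimately have "cs ! Suc j \<in> T" unfolding T_def by simp
    thus ?case using TS by simp
  qed
  have "insert w (set cs) \<subseteq> S"
    using inS w wS unfolding S_def by (auto simp: in_set_conv_nth)
  moreover have "finite S" unfolding S_def by auto
  ultimately have "card (insert w (set cs)) \<le> card S" by (rule card_mono[rotated])
  moreover have "card (insert w (set cs)) = length cs + 1"
  proof -
    have "w \<notin> set cs" using sub by auto
    thus ?thesis using dist by (simp add: distinct_card)
  qed
  ultimately show False using TS cT lenk by simp
qed

theorem theorem2:
  fixes n :: nat and d :: "nat \<Rightarrow> real" and E :: "nat \<Rightarrow> (nat \<times> nat) set"
  assumes "n \<ge> 2"
    and "inj_on d {1..n}"
    and "\<And>k. E k \<subseteq> {1..n} \<times> {1..n}"
    and "\<And>k. k \<le> n - 2 \<Longrightarrow> contains_cycle {1..n} E (nu n k) k"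
  shows "\<forall>w\<in>{1..n}. \<forall>k\<le>n - 2. card {i\<in>{1..n}. d w \<in> K d E (Suc k) i} \<ge> k + 2"
proof (intro ballI allI impI)
  fix w k assume w: "w \<in> {1..n}" and k: "k \<le> n - 2"
  have wK: "d w \<in> K d E j w" for j
    by (induction j) auto
  have "k \<le> n - 2 \<Longrightarrow> card {i\<in>{1..n}. d w \<in> K d E (Suc k) i} \<ge> k + 2" for k
  proof (induction k)
    case 0
    have "card {i\<in>{1..n}. d w \<in> K d E 0 i} \<ge> 0 + 1"
    proof -
      have "{w} \<subseteq> {i\<in>{1..n}. d w \<in> K d E 0 i}" using w by simp
      from card_mono[OF _ this] show ?thesis by simp
    qed
    from step[OF assms(1) 0 assms(4)[OF 0] w wK this] show ?case by simp
  next
    case (Suc k)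
    have "card {i\<in>{1..n}. d w \<in> K d E (Suc k) i} \<ge> Suc k + 1"
      using Suc by simp
    from step[OF assms(1) Suc.prems assms(4)[OF Suc.prems] w wK this] show ?case by simp
  qed
  thus "card {i\<in>{1..n}. d w \<in> K d E (Suc k) i} \<ge> k + 2" using k .
qed

end
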